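(* Let $\{\Omega_k\}_{k\in\mathbb N_0}\subset\mathcal F$ be pairwise disjoint events with $\mathbb P(\Omega_k)=(1-e^{-1})e^{-k}$, let $X_{-1}:=0$, $X_\ell:=\sum_{k=0}^\ell e^{k/4}\mathbf 1_{\Omega_k}$ for $\ell\in\mathbb N_0$, and $X:=\sum_{k=0}^\infty e^{k/4}\mathbf 1_{\Omega_k}$. Then: $|\mathbb E[X-X_\ell]|=\Theta_\ell(e^{-3\ell/4})$ and $V_\ell=\Theta_\ell(e^{-\ell/2})$ (so Assumption A holds with $\alpha=3/4$, $\beta=1/2$); for every $x>1$, $$\lim_{\ell\to\infty}\mathbb E\Big[\frac{|\Delta_\ell X-\mathbb E[\Delta_\ell X]|^2}{V_\ell}\mathbf 1\Big\{\frac{|\Delta_\ell X-\mathbb E[\Delta_\ell X]|^2}{V_\ell}>x\Big\}\Big]=1,$$ so the sequence $\{|\Delta_\ell X-\mathbb E[\Delta_\ell X]|^2/V_\ell\}_{\ell\ge0}$ is not uniformly integrable; and nevertheless, for any costs $C_\ell=\Theta_\ell(e^{\gamma\ell})$ with $0<\gamma\le 1/2$, the normalized MLMC estimator satisfies $\frac{\mathcal A_{ML}(\epsilon)-\mathbb E[X_{L(\epsilon)}]}{\sqrt{\mathrm{Var}(\mathcal A_{ML}(\epsilon))}}\xrightarrow{d}\mathcal N(0,1)$ as $\epsilon\downarrow0$.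
   Context: $\Delta_\ell X:=X_\ell-X_{\ell-1}$, $V_\ell:=\mathrm{Var}(\Delta_\ell X)$. $f_\ell=\Theta_\ell(y_\ell)$ means there are constants $C>c>0$ with $c|y_\ell|<|f_\ell|<C|y_\ell|$ for all $\ell\in\mathbb N_0$. Assumption A: positive constants $\alpha,\beta,\gamma$ with $\min(\beta,\gamma)\le2\alpha$ and $c_\alpha>0$ such that for all $\ell\in\mathbb N_0$: $|\mathbb E[X-X_\ell]|\le c_\alpha e^{-\alpha\ell}$, $V_\ell\le Ce^{-\beta\ell}$, $C_\ell=\Theta_\ell(e^{\gamma\ell})$, where $C_\ell>0$ is the cost of sampling $\Delta_\ell X$. With $S_k:=\sum_{\ell=0}^k\sqrt{V_\ell C_\ell}$, the MLMC estimator is: $L(\epsilon):=\max(\lceil \log(c_\alpha\epsilon^{-1})/\alpha\rceil,1)$, $M_\ell(\epsilon):=\max\big(\lceil \epsilon^{-2}\sqrt{V_\ell/C_\ell}\,S_{L(\epsilon)}\rceil,1\big)$, $\mathcal A_{ML}(\epsilon):=\sum_{\ell=0}^{L(\epsilon)}\frac{1}{M_\ell(\epsilon)}\sum_{i=1}^{M_\ell(\epsilon)}\Delta_\ell X^i$, with $\{\Delta_\ell X^i\}$ mutually independent and $\Delta_\ell X^i\sim\Delta_\ell X$. *)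

theory Defs
  imports "HOL-Probability.Probability"
begin

definition Theta :: "(nat \<Rightarrow> real) \<Rightarrow> (nat \<Rightarrow> real) \<Rightarrow> bool" where
  "Theta f y \<longleftrightarrow> (\<exists>c C. 0 < c \<and> c < C \<and> (\<forall>l. c * \<bar>y l\<bar> < \<bar>f l\<bar> \<and> \<bar>f l\<bar> < C * \<bar>y l\<bar>))"

definition exX :: "(nat \<Rightarrow> 'a set) \<Rightarrow> 'a \<Rightarrow> real" where
  "exX \<Omega> \<omega> = (\<Sum>k. exp (real k / 4) * indicator (\<Omega> k) \<omega>)"

definition exXl :: "(nat \<Rightarrow> 'a set) \<Rightarrow> nat \<Rightarrow> 'a \<Rightarrow> real" where
  "exXl \<Omega> l \<omega> = (\<Sum>k=0..l. exp (real k / 4) * indicator (\<Omega> k) \<omega>)"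

definition exdX :: "(nat \<Rightarrow> 'a set) \<Rightarrow> nat \<Rightarrow> 'a \<Rightarrow> real" where
  "exdX \<Omega> l \<omega> = exXl \<Omega> l \<omega> - (if l = 0 then 0 else exXl \<Omega> (l - 1) \<omega>)"

definition unif_integrable :: "'a measure \<Rightarrow> (nat \<Rightarrow> 'a \<Rightarrow> real) \<Rightarrow> bool" where
  "unif_integrable M Y \<longleftrightarrow> (\<forall>l. integrable M (Y l)) \<and>
     (\<forall>e>0. \<exists>K. \<forall>l. (\<integral>\<omega>. \<bar>Y l \<omega>\<bar> * indicator {\<omega>\<in>space M. \<bar>Y l \<omega>\<bar> > K} \<omega> \<partial>M) < e)"

definition mlmc_L :: "real \<Rightarrow> real \<Rightarrow> real \<Rightarrow> nat" where
  "mlmc_L c\<alpha> \<alpha> \<epsilon> = nat (max (\<lceil>ln (c\<alpha> / \<epsilon>) / \<alpha>\<rceil>) 1)"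

definition mlmc_S :: "(nat \<Rightarrow> real) \<Rightarrow> (nat \<Rightarrow> real) \<Rightarrow> nat \<Rightarrow> real" where
  "mlmc_S V C k = (\<Sum>l=0..k. sqrt (V l * C l))"

definition mlmc_M :: "(nat \<Rightarrow> real) \<Rightarrow> (nat \<Rightarrow> real) \<Rightarrow> real \<Rightarrow> real \<Rightarrow> real \<Rightarrow> nat \<Rightarrow> nat" where
  "mlmc_M V C c\<alpha> \<alpha> \<epsilon> l =
     nat (max (\<lceil>(1 / \<epsilon>\<^sup>2) * sqrt (V l / C l) * mlmc_S V C (mlmc_L c\<alpha> \<alpha> \<epsilon>)\<rceil>) 1)"

definition mlmc_est :: "(nat \<Rightarrow> real) \<Rightarrow> (nat \<Rightarrow> real) \<Rightarrow> real \<Rightarrow> real \<Rightarrow> real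
     \<Rightarrow> (nat \<Rightarrow> nat \<Rightarrow> 'b \<Rightarrow> real) \<Rightarrow> 'b \<Rightarrow> real" where
  "mlmc_est V C c\<alpha> \<alpha> \<epsilon> D \<omega> =
     (\<Sum>l=0..mlmc_L c\<alpha> \<alpha> \<epsilon>. (1 / real (mlmc_M V C c\<alpha> \<alpha> \<epsilon> l)) *
        (\<Sum>i=1..mlmc_M V C c\<alpha> \<alpha> \<epsilon> l. D l i \<omega>))"

definition conv_distr_at_0 :: "'b measure \<Rightarrow> (real \<Rightarrow> 'b \<Rightarrow> real) \<Rightarrow> bool" where
  "conv_distr_at_0 N Z \<longleftrightarrow> (\<forall>\<epsilon>s. (\<forall>n. \<epsilon>s n > 0) \<longrightarrow> \<epsilon>s \<longlonglongrightarrow> 0 \<longrightarrow>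
      weak_conv_m (\<lambda>n. distr N borel (Z (\<epsilon>s n))) std_normal_distribution)"

end

theory Submission
  imports Defs
begin


lemma exp_neg_approx:
  fixes c :: real assumes "0 \<le> c"
  shows "\<bar>exp (-c) - (1 - c)\<bar> \<le> c^2 / 2"
proof -
  have l: "1 - c \<le> exp (-c)" using exp_ge_add_one_self[of "-c"] by simp
  have q: "1 + c + c^2/2 \<le> exp c" using exp_lower_Taylor_quadratic[OF assms] .
  have pos: "0 < 1 + c + c^2/2" using assms by (simp add: add_pos_nonneg)
  have "exp (-c) = 1 / exp c" by (simp add: exp_minus field_simps)
  also have "\<dots> \<le> 1 / (1 + c + c^2/2)" using q pos by (simp add: frac_le)
  also have "\<dots> \<le> 1 - c + c^2/2"
  proof -
    have "(1 - c + c^2/2) * (1 + c + c^2/2) = 1 + c^4/4" by (simp add: algebra_simps power2_eq_square power4_eq_xxxx)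
    hence "1 \<le> (1 - c + c^2/2) * (1 + c + c^2/2)" by simp
    thus ?thesis using pos by (simp add: divide_le_eq)
  qed
  finally show ?thesis using l by simp
qed

lemma sq_le_of_abs_le: "\<bar>x::real\<bar> \<le> b \<Longrightarrow> x^2 \<le> b^2"
  by (metis abs_ge_zero power2_abs power_mono)

lemma clt_triangular:
  fixes N :: "'b measure" and I :: "nat \<Rightarrow> 'i set" and Y :: "nat \<Rightarrow> 'i \<Rightarrow> 'b \<Rightarrow> real"
    and b :: "nat \<Rightarrow> real"
  assumes PN: "prob_space N"
    and fin: "\<And>n. finite (I n)"
    and ind: "\<And>n. prob_space.indep_vars N (\<lambda>_. borel) (Y n) (I n)"
    and int2: "\<And>n j. j \<in> I n \<Longrightarrow> integrable N (\<lambda>\<omega>. (Y n j \<omega>)\<^sup>2)"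
    and mean: "\<And>n j. j \<in> I n \<Longrightarrow> integral\<^sup>L N (Y n j) = 0"
    and var: "\<And>n. (\<Sum>j\<in>I n. integral\<^sup>L N (\<lambda>\<omega>. (Y n j \<omega>)\<^sup>2)) = 1"
    and bnd: "eventually (\<lambda>n. \<forall>j\<in>I n. AE \<omega> in N. \<bar>Y n j \<omega>\<bar> \<le> b n) sequentially"
    and b0: "b \<longlonglongrightarrow> 0"
  shows "weak_conv_m (\<lambda>n. distr N borel (\<lambda>\<omega>. \<Sum>j\<in>I n. Y n j \<omega>)) std_normal_distribution"
proof -
  interpret prob_space N by (rule PN)
  have rv[measurable]: "j \<in> I n \<Longrightarrow> Y n j \<in> borel_measurable N" for n j
    using ind[of n] unfolding indep_vars_def2 by auto
  have int1: "j \<in> I n \<Longrightarrow> integrable N (Y n j)" for n j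
    by (rule square_integrable_imp_integrable[OF rv int2])
  define \<sigma> where "\<sigma> n j = expectation (\<lambda>\<omega>. (Y n j \<omega>)\<^sup>2)" for n j
  have \<sigma>_nn: "0 \<le> \<sigma> n j" for n j unfolding \<sigma>_def by simp
  show ?thesis
  proof (rule levy_continuity)
    fix t :: real
    define \<phi> where "\<phi> n = char (distr N borel (\<lambda>\<omega>. \<Sum>j\<in>I n. Y n j \<omega>)) t" for n
    define \<psi> where "\<psi> n j = char (distr N borel (Y n j)) t" for n j
    define c where "c n j = t^2 * \<sigma> n j / 2" for n j
    have c_nn: "0 \<le> c n j" for n j unfolding c_def using \<sigma>_nn by simp
    have csum: "(\<Sum>j\<in>I n. c n j) = t^2/2" for n
      unfolding c_def using var[of n] by (simp add: \<sigma>_def sum_divide_distrib[symmetric] sum_distrib_left[symmetric])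
    have \<phi>_eq: "\<phi> n = (\<Prod>j\<in>I n. \<psi> n j)" for n
      unfolding \<phi>_def \<psi>_def by (rule char_distr_sum[OF ind])
    have ev: "eventually (\<lambda>n. cmod (\<phi> n - complex_of_real (exp (-(t^2)/2)))
                 \<le> \<bar>t\<bar>^3 * \<bar>b n\<bar> / 6 + t^4 * (b n)^2 / 8) sequentially"
    proof -
      have "eventually (\<lambda>n. t^2 * (b n)^2 \<le> 2) sequentially"
      proof -
        have "(\<lambda>n. t^2 * (b n)^2) \<longlonglongrightarrow> t^2 * 0^2" by (intro tendsto_intros b0)
        hence "(\<lambda>n. t^2 * (b n)^2) \<longlonglongrightarrow> 0" by simp
        hence "eventually (\<lambda>n. t^2 * (b n)^2 < 2) sequentially"
          by (rule order_tendstoD(2)) simp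
        thus ?thesis by (auto elim: eventually_mono)
      qed
      with bnd show ?thesis
      proof eventually_elim
        case (elim n)
        have sb: "\<sigma> n j \<le> (b n)^2" if j: "j \<in> I n" for j
        proof -
          have "expectation (\<lambda>\<omega>. (Y n j \<omega>)\<^sup>2) \<le> expectation (\<lambda>\<omega>. (b n)^2)"
          proof (rule integral_mono_AE)
            show "AE \<omega> in N. (Y n j \<omega>)\<^sup>2 \<le> (b n)\<^sup>2"
              using elim(1) j by (auto elim!: eventually_mono simp: sq_le_of_abs_le)
          qed (use int2 j in auto)
          thus ?thesis by (simp add: \<sigma>_def prob_space)
        qed
        have c_le: "c n j \<le> t^2 * (b n)^2 / 2" if "j \<in> I n" for j
          unfolding c_def using sb[OF that] by (simp add: mult_left_mono divide_right_mono)
        have c_le1: "c n j \<le> 1" if "j \<in> I n" for j using c_le[OF that] elim(2) by simp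
        have bn: "0 \<le> b n" if "j \<in> I n" for j
        proof -
          have "AE \<omega> in N. \<bar>Y n j \<omega>\<bar> \<le> b n" using elim(1) that by blast
          hence "AE \<omega> in N. 0 \<le> b n" by (rule eventually_mono) (auto intro: order_trans[OF abs_ge_zero])
          thus ?thesis by simp
        qed
        have A: "cmod (\<psi> n j - complex_of_real (1 - c n j)) \<le> \<bar>t\<bar>^3 * b n * \<sigma> n j / 6"
          if j: "j \<in> I n" for j
        proof -
          have "cmod (\<psi> n j - (1 - t^2 * \<sigma> n j / 2)) \<le>
              (t^2 / 6) * expectation (\<lambda>\<omega>. min (6 * (Y n j \<omega>)^2) (\<bar>t\<bar> * \<bar>Y n j \<omega>\<bar>^3))"
            unfolding \<psi>_def
            by (rule char_approx3') (use j int1 int2 mean in \<open>auto simp: \<sigma>_def\<close>)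
          also have "\<dots> \<le> (t^2 / 6) * expectation (\<lambda>\<omega>. \<bar>t\<bar> * b n * (Y n j \<omega>)^2)"
          proof (intro mult_left_mono integral_mono_AE)
            show "integrable N (\<lambda>\<omega>. \<bar>t\<bar> * b n * (Y n j \<omega>)\<^sup>2)" using int2 j by auto
            show "integrable N (\<lambda>\<omega>. min (6 * (Y n j \<omega>)\<^sup>2) (\<bar>t\<bar> * \<bar>Y n j \<omega>\<bar> ^ 3))"
              by (rule Bochner_Integration.integrable_bound[where f="\<lambda>\<omega>. 6 * (Y n j \<omega>)^2"])
                 (use int2 j in auto)
            show "AE \<omega> in N. min (6 * (Y n j \<omega>)\<^sup>2) (\<bar>t\<bar> * \<bar>Y n j \<omega>\<bar> ^ 3) \<le> \<bar>t\<bar> * b n * (Y n j \<omega>)\<^sup>2"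
            proof -
              have "AE \<omega> in N. \<bar>Y n j \<omega>\<bar> \<le> b n" using elim(1) j by blast
              thus ?thesis
              proof (rule eventually_mono)
              fix \<omega> assume h: "\<bar>Y n j \<omega>\<bar> \<le> b n"
              have "\<bar>t\<bar> * \<bar>Y n j \<omega>\<bar> ^ 3 = \<bar>t\<bar> * \<bar>Y n j \<omega>\<bar> * (Y n j \<omega>)\<^sup>2"
                by (simp add: power3_eq_cube power2_eq_square abs_mult_self_eq)
              also have "\<dots> \<le> \<bar>t\<bar> * b n * (Y n j \<omega>)\<^sup>2"
                using h by (intro mult_right_mono mult_left_mono) auto
              finally show "min (6 * (Y n j \<omega>)\<^sup>2) (\<bar>t\<bar> * \<bar>Y n j \<omega>\<bar> ^ 3) \<le> \<bar>t\<bar> * b n * (Y n j \<omega>)\<^sup>2"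
                by simp
            qed
            qed
          qed simp
          also have "\<dots> = \<bar>t\<bar>^3 * b n * \<sigma> n j / 6"
            by (simp add: \<sigma>_def power2_eq_square power3_eq_cube abs_mult_self_eq)
          finally show ?thesis by (simp add: c_def)
        qed
        have B: "\<bar>exp (- c n j) - (1 - c n j)\<bar> \<le> c n j * (t^2 * (b n)^2 / 4)" if j: "j \<in> I n" for j
        proof -
          have "\<bar>exp (- c n j) - (1 - c n j)\<bar> \<le> (c n j)^2 / 2" by (rule exp_neg_approx[OF c_nn])
          also have "\<dots> = c n j * c n j / 2" by (simp add: power2_eq_square)
          also have "\<dots> \<le> c n j * (t^2 * (b n)^2 / 2) / 2"
            using c_le[OF j] c_nn[of n j] by (intro divide_right_mono mult_left_mono) auto
          finally show ?thesis by simp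
        qed
        have n1: "cmod (\<psi> n j) \<le> 1" if "j \<in> I n" for j
          unfolding \<psi>_def by (rule real_distribution.cmod_char_le_1) (use that in auto)
        have n2: "cmod (complex_of_real (1 - c n j)) \<le> 1" if "j \<in> I n" for j
          using c_le1[OF that] c_nn[of n j] by (simp only: norm_of_real abs_le_iff) simp
        have n3: "cmod (complex_of_real (exp (- c n j))) \<le> 1" for j
          using c_nn[of n j] by simp
        have "cmod (\<phi> n - complex_of_real (exp (-(t^2)/2)))
            \<le> cmod ((\<Prod>j\<in>I n. \<psi> n j) - (\<Prod>j\<in>I n. complex_of_real (1 - c n j)))
              + cmod ((\<Prod>j\<in>I n. complex_of_real (1 - c n j)) - (\<Prod>j\<in>I n. complex_of_real (exp (- c n j))))"
        proof -
          have "(\<Prod>j\<in>I n. complex_of_real (exp (- c n j))) = complex_of_real (exp (-(t^2)/2))"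
          proof -
            have "(\<Prod>j\<in>I n. exp (- c n j)) = exp (\<Sum>j\<in>I n. - c n j)"
              using fin[of n] by (simp add: exp_sum)
            also have "\<dots> = exp (-(t^2)/2)" using csum[of n] by (simp add: sum_negf)
            finally show ?thesis by (simp flip: of_real_prod)
          qed
          thus ?thesis unfolding \<phi>_eq by (metis norm_triangle_ineq diff_add_cancel add_diff_eq)
        qed
        also have "\<dots> \<le> (\<Sum>j\<in>I n. \<bar>t\<bar>^3 * b n * \<sigma> n j / 6) + (\<Sum>j\<in>I n. c n j * (t^2 * (b n)^2 / 4))"
        proof (rule add_mono)
          show "cmod ((\<Prod>j\<in>I n. \<psi> n j) - (\<Prod>j\<in>I n. complex_of_real (1 - c n j))) \<le> (\<Sum>j\<in>I n. \<bar>t\<bar>^3 * b n * \<sigma> n j / 6)"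
            using norm_prod_diff[of "I n" "\<psi> n" "\<lambda>j. complex_of_real (1 - c n j)"] n1 n2 A
            by (meson order_trans sum_mono)
          have "cmod ((\<Prod>j\<in>I n. complex_of_real (1 - c n j)) - (\<Prod>j\<in>I n. complex_of_real (exp (- c n j))))
              \<le> (\<Sum>j\<in>I n. cmod (complex_of_real (1 - c n j) - complex_of_real (exp (- c n j))))"
            using norm_prod_diff[of "I n" "\<lambda>j. complex_of_real (1 - c n j)" "\<lambda>j. complex_of_real (exp (- c n j))"] n2 n3
            by blast
          also have "\<dots> \<le> (\<Sum>j\<in>I n. c n j * (t^2 * (b n)^2 / 4))"
          proof (rule sum_mono)
            fix j assume "j \<in> I n"
            thus "cmod (complex_of_real (1 - c n j) - complex_of_real (exp (- c n j))) \<le> c n j * (t^2 * (b n)^2 / 4)"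
              using B[of j] by (simp del: of_real_diff add: of_real_diff[symmetric] abs_minus_commute)
          qed
          finally show "cmod ((\<Prod>j\<in>I n. complex_of_real (1 - c n j)) - (\<Prod>j\<in>I n. complex_of_real (exp (- c n j))))
              \<le> (\<Sum>j\<in>I n. c n j * (t^2 * (b n)^2 / 4))" .
        qed
        also have "\<dots> = \<bar>t\<bar>^3 * b n / 6 * (\<Sum>j\<in>I n. \<sigma> n j) + (\<Sum>j\<in>I n. c n j) * (t^2 * (b n)^2 / 4)"
          by (simp add: sum_distrib_left sum_distrib_right sum_divide_distrib)
        also have "\<dots> = \<bar>t\<bar>^3 * b n / 6 + t^4 * (b n)^2 / 8"
          using var[of n] csum[of n] by (simp add: \<sigma>_def power4_eq_xxxx power2_eq_square)
        also have "\<dots> \<le> \<bar>t\<bar>^3 * \<bar>b n\<bar> / 6 + t^4 * (b n)^2 / 8"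
          by (simp add: divide_right_mono mult_left_mono)
        finally show ?case .
      qed
    qed
    have lim0: "(\<lambda>n. \<bar>t\<bar>^3 * \<bar>b n\<bar> / 6 + t^4 * (b n)^2 / 8) \<longlonglongrightarrow> 0"
    proof -
      have "(\<lambda>n. \<bar>t\<bar>^3 * \<bar>b n\<bar> / 6 + t^4 * (b n)^2 / 8) \<longlonglongrightarrow> \<bar>t\<bar>^3 * \<bar>0\<bar> / 6 + t^4 * 0^2 / 8"
        by (intro tendsto_intros b0) auto
      thus ?thesis by simp
    qed
    have "(\<lambda>n. \<phi> n - complex_of_real (exp (-(t^2)/2))) \<longlonglongrightarrow> 0"
      by (rule Lim_null_comparison[OF ev lim0])
    hence "\<phi> \<longlonglongrightarrow> complex_of_real (exp (-(t^2)/2))"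
      by (simp add: LIM_zero_iff)
    thus "(\<lambda>n. char (distr N borel (\<lambda>\<omega>. \<Sum>j\<in>I n. Y n j \<omega>)) t) \<longlonglongrightarrow> char std_normal_distribution t"
      unfolding \<phi>_def char_std_normal_distribution by simp
  next
    show "real_distribution std_normal_distribution" by (rule real_dist_normal_dist)
  next
    fix n show "real_distribution (distr N borel (\<lambda>\<omega>. \<Sum>j\<in>I n. Y n j \<omega>))"
      by (intro real_distribution_distr) (auto intro: borel_measurable_sum)
  qed
qed



lemma (in prob_space) var_sum_indep:
  fixes X :: "'i \<Rightarrow> 'a \<Rightarrow> real"
  assumes "finite I" "indep_vars (\<lambda>_. borel) X I"
    "\<And>i. i \<in> I \<Longrightarrow> integrable M (\<lambda>\<omega>. (X i \<omega>)\<^sup>2)" "\<And>i. i \<in> I \<Longrightarrow> expectation (X i) = 0"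
  shows "integrable M (\<lambda>\<omega>. (\<Sum>i\<in>I. X i \<omega>)\<^sup>2) \<and>
         expectation (\<lambda>\<omega>. (\<Sum>i\<in>I. X i \<omega>)\<^sup>2) = (\<Sum>i\<in>I. expectation (\<lambda>\<omega>. (X i \<omega>)\<^sup>2))"
  using assms
proof (induction I rule: finite_induct)
  case empty
  then show ?case by simp
next
  case (insert x F)
  have indF: "indep_vars (\<lambda>_. borel) X F"
    using insert.prems(1) by (rule indep_vars_subset) auto
  have IH: "integrable M (\<lambda>\<omega>. (\<Sum>i\<in>F. X i \<omega>)\<^sup>2)"
     "expectation (\<lambda>\<omega>. (\<Sum>i\<in>F. X i \<omega>)\<^sup>2) = (\<Sum>i\<in>F. expectation (\<lambda>\<omega>. (X i \<omega>)\<^sup>2))"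
    using insert.IH[OF indF] insert.prems by auto
  have rv[measurable]: "i \<in> insert x F \<Longrightarrow> X i \<in> borel_measurable M" for i
    using insert.prems(1) unfolding indep_vars_def2 by auto
  have int: "i \<in> insert x F \<Longrightarrow> integrable M (X i)" for i
    by (rule square_integrable_imp_integrable[OF rv insert.prems(2)])
  have intS: "integrable M (\<lambda>\<omega>. \<Sum>i\<in>F. X i \<omega>)"
    by (rule Bochner_Integration.integrable_sum) (use int in auto)
  have ESum: "expectation (\<lambda>\<omega>. \<Sum>i\<in>F. X i \<omega>) = 0"
    using int insert.prems(3) by (simp add: Bochner_Integration.integral_sum)
  have iv: "indep_var borel (X x) borel (\<lambda>\<omega>. \<Sum>i\<in>F. X i \<omega>)"
    by (rule indep_vars_sum[OF insert.hyps(1,2) insert.prems(1)])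
  have intP: "integrable M (\<lambda>\<omega>. X x \<omega> * (\<Sum>i\<in>F. X i \<omega>))"
    by (rule indep_var_integrable[OF iv int intS]) simp
  have EP: "expectation (\<lambda>\<omega>. X x \<omega> * (\<Sum>i\<in>F. X i \<omega>)) = 0"
    using indep_var_lebesgue_integral[OF iv int intS] ESum by simp
  have eq: "(\<lambda>\<omega>. (\<Sum>i\<in>insert x F. X i \<omega>)\<^sup>2) =
     (\<lambda>\<omega>. ((X x \<omega>)\<^sup>2 + 2 * (X x \<omega> * (\<Sum>i\<in>F. X i \<omega>))) + (\<Sum>i\<in>F. X i \<omega>)\<^sup>2)"
    using insert.hyps by (simp add: power2_eq_square algebra_simps)
  have i1: "integrable M (\<lambda>\<omega>. (X x \<omega>)\<^sup>2)" using insert.prems(2) by simp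
  show ?case unfolding eq
    using i1 intP IH EP insert.hyps by (simp add: Bochner_Integration.integral_add)
qed



lemma sqrt_exp: "sqrt (exp x) = exp (x / 2)"
  by (rule real_sqrt_unique) (simp_all add: power2_eq_square exp_add[symmetric])

lemma mlmc_M_ge: "x \<le> real (nat (max \<lceil>x\<rceil> 1))"
  by (smt (verit) le_of_int_ceiling of_int_1 of_int_le_iff of_nat_nat)

lemma mlmc_M_ge1: "1 \<le> real (nat (max \<lceil>x\<rceil> 1))"
  by simp

lemma mlmc_M_le: "1 \<le> x \<Longrightarrow> real (nat (max \<lceil>x\<rceil> 1)) \<le> 2 * x"
proof -
  assume x: "1 \<le> x"
  hence "max \<lceil>x\<rceil> 1 = \<lceil>x\<rceil>" by (simp add: max_def)
  moreover have "real_of_int \<lceil>x\<rceil> \<le> x + 1" by linarith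
  moreover have "0 \<le> \<lceil>x\<rceil>" using x by linarith
  ultimately show ?thesis using x by linarith
qed

lemma mlmc_L_facts:
  assumes ca: "0 < ca" and e: "0 < e" and h: "3/4 \<le> ln (ca / e)"
  shows "4/3 * ln (ca / e) \<le> real (mlmc_L ca (3/4) e)"
    and "e \<le> ca * exp (- 3/4 * (real (mlmc_L ca (3/4) e) - 1))"
proof -
  define r where "r = ln (ca / e) / (3/4)"
  have r1: "1 \<le> r" using h by (simp add: r_def)
  hence c1: "1 \<le> \<lceil>r\<rceil>" by linarith
  have L: "real (mlmc_L ca (3/4) e) = real_of_int \<lceil>r\<rceil>"
  proof -
    have "max \<lceil>r\<rceil> 1 = \<lceil>r\<rceil>" using c1 by simp
    thus ?thesis using c1 unfolding mlmc_L_def r_def[symmetric] by simp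
  qed
  show "4/3 * ln (ca / e) \<le> real (mlmc_L ca (3/4) e)"
  proof -
    have "r \<le> real_of_int \<lceil>r\<rceil>" by (rule le_of_int_ceiling)
    moreover have "4/3 * ln (ca / e) = r" by (simp add: r_def)
    ultimately show ?thesis unfolding L by linarith
  qed
  have "real (mlmc_L ca (3/4) e) < r + 1" unfolding L by linarith
  hence "3/4 * (real (mlmc_L ca (3/4) e) - 1) < ln (ca / e)" by (simp add: r_def field_simps)
  hence "exp (3/4 * (real (mlmc_L ca (3/4) e) - 1)) < ca / e"
    using ca e by (metis divide_pos_pos exp_less_mono exp_ln)
  hence "e * exp (3/4 * (real (mlmc_L ca (3/4) e) - 1)) < ca" using e by (simp add: field_simps)
  thus "e \<le> ca * exp (- 3/4 * (real (mlmc_L ca (3/4) e) - 1))"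
    by (simp add: exp_minus field_simps)
qed


lemma mlmc_bound:
  fixes V C :: "nat \<Rightarrow> real" and \<gamma> v0 c1 C1 ca e :: real
  assumes v0: "0 < v0" and Vlow: "\<And>l. v0 * exp (- real l / 2) \<le> V l"
    and c1: "0 < c1" and Clow: "\<And>l. c1 * exp (\<gamma> * real l) \<le> C l"
    and Cup: "\<And>l. C l \<le> C1 * exp (\<gamma> * real l)"
    and \<gamma>: "\<gamma> \<le> 1/2" and \<gamma>0: "0 \<le> \<gamma>"
    and ca: "0 < ca" and e: "0 < e" and eV: "e^2 \<le> V 0" and eL: "3/4 \<le> ln (ca / e)"
    and l: "l \<le> mlmc_L ca (3/4) e"
  shows "exp (real l / 2) / ((real (mlmc_M V C ca (3/4) e l))^2 *
           (\<Sum>k=0..mlmc_L ca (3/4) e. V k / real (mlmc_M V C ca (3/4) e k)))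
     \<le> (2 * C1 / (v0 * sqrt (v0 * c1) * sqrt (V 0 * C 0)) * (ca^2 * exp (3/2))) / (real (mlmc_L ca (3/4) e) + 1)"
proof -
  define L where "L = mlmc_L ca (3/4) e"
  define S where "S = mlmc_S V C L"
  define x where "x k = (1 / e\<^sup>2) * sqrt (V k / C k) * S" for k
  define Mk where "Mk k = real (mlmc_M V C ca (3/4) e k)" for k
  define s2 where "s2 = (\<Sum>k=0..L. V k / Mk k)"
  have Mk_eq: "Mk k = real (nat (max \<lceil>x k\<rceil> 1))" for k
    unfolding Mk_def mlmc_M_def x_def S_def L_def ..
  have Vpos: "0 < V k" for k using Vlow[of k] v0 by (smt (verit) exp_gt_zero mult_pos_pos)
  have Cpos: "0 < C k" for k using Clow[of k] c1 by (smt (verit) exp_gt_zero mult_pos_pos)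
  have C1pos: "0 < C1" using Cpos[of 0] Cup[of 0] by (smt (verit) exp_gt_zero mult_nonpos_nonneg)
  have S0: "sqrt (V 0 * C 0) \<le> S"
    unfolding S_def mlmc_S_def
    by (rule member_le_sum[of 0 "{0..L}" "\<lambda>k. sqrt (V k * C k)"]) (auto simp: less_imp_le[OF Vpos] less_imp_le[OF Cpos])
  have V0C0: "0 < sqrt (V 0 * C 0)" using Vpos Cpos by simp
  have Spos: "0 < S" using S0 V0C0 by linarith
  have xpos: "0 < x k" for k unfolding x_def using e Spos Vpos[of k] Cpos[of k] by simp
  have Mkx: "x k \<le> Mk k" for k unfolding Mk_eq by (rule mlmc_M_ge)
  have Mk1: "1 \<le> Mk k" for k unfolding Mk_eq by (rule mlmc_M_ge1)
  have VMk: "0 \<le> V k / Mk k" for k using Vpos[of k] Mk1[of k] by simp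
  have sqid: "sqrt (V 0 / C 0) * sqrt (V 0 * C 0) = V 0"
    using Vpos[of 0] Cpos[of 0] by (simp add: real_sqrt_mult[symmetric] power2_eq_square[symmetric])
  have x0: "1 \<le> x 0"
  proof -
    have "V 0 / e\<^sup>2 \<le> x 0"
    proof -
      have "V 0 = sqrt (V 0 / C 0) * sqrt (V 0 * C 0)" using sqid by simp
      also have "\<dots> \<le> sqrt (V 0 / C 0) * S" using S0 Vpos[of 0] Cpos[of 0] by (intro mult_left_mono) auto
      finally show ?thesis unfolding x_def using e by (simp add: divide_right_mono)
    qed
    moreover have "1 \<le> V 0 / e\<^sup>2" using eV e by simp
    ultimately show ?thesis by linarith
  qed
  have M0: "Mk 0 \<le> 2 * x 0" unfolding Mk_eq by (rule mlmc_M_le[OF x0])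
  define s0 where "s0 = e\<^sup>2 * sqrt (V 0 * C 0) / (2 * S)"
  have s0pos: "0 < s0" unfolding s0_def using e V0C0 Spos by simp
  have s0_eq: "V 0 / (2 * x 0) = s0"
  proof -
    have "V 0 / (2 * x 0) = e\<^sup>2 * (V 0 / sqrt (V 0 / C 0)) / (2 * S)"
      unfolding x_def using e Spos by (simp add: field_simps)
    also have "V 0 / sqrt (V 0 / C 0) = sqrt (V 0 * C 0)"
      using sqid Vpos[of 0] Cpos[of 0] by (simp add: field_simps)
    finally show ?thesis unfolding s0_def .
  qed
  have s2s0: "s0 \<le> s2"
  proof -
    have "V 0 / (2 * x 0) \<le> V 0 / Mk 0"
      using M0 Vpos[of 0] Mk1[of 0] by (intro divide_left_mono) auto
    also have "\<dots> \<le> s2" unfolding s2_def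
      by (rule member_le_sum[of 0 "{0..L}" "\<lambda>k. V k / Mk k"]) (use VMk in auto)
    finally show ?thesis using s0_eq by simp
  qed
  have step1: "exp (real l / 2) / ((Mk l)^2 * s2) \<le> exp (real l / 2) / ((x l)^2 * s0)"
    using xpos[of l] Mkx[of l] s2s0 s0pos
    by (intro divide_left_mono mult_mono power_mono) auto
  have xl2: "(x l)^2 = V l * S^2 / (C l * (e\<^sup>2)^2)"
    unfolding x_def using Vpos[of l] Cpos[of l] by (simp add: power_mult_distrib power_divide)
  define A where "A = exp (real l / 2) * C l / V l"
  have step2: "exp (real l / 2) / ((x l)^2 * s0) = 2 * e\<^sup>2 * A / (S * sqrt (V 0 * C 0))"
    unfolding xl2 s0_def A_def using e Spos Vpos[of l] Cpos[of l] V0C0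
    by (simp add: field_simps power2_eq_square)
  define A' where "A' = C1 / v0 * exp ((1 + \<gamma>) * real L)"
  have AA': "A \<le> A'"
  proof -
    have "A \<le> exp (real l / 2) * (C1 * exp (\<gamma> * real l)) / (v0 * exp (- real l / 2))"
      unfolding A_def using Cup[of l] Vlow[of l] Cpos[of l] v0
      by (intro frac_le mult_left_mono) auto
    also have "\<dots> = C1 / v0 * exp ((1 + \<gamma>) * real l)"
      using v0 by (simp add: exp_minus field_simps exp_add[symmetric] distrib_right)
    also have "\<dots> \<le> A'" unfolding A'_def using l C1pos v0 \<gamma>0
      by (intro mult_left_mono) (auto simp: L_def intro!: mult_left_mono)
    finally show ?thesis .
  qed
  define Sl where "Sl = (real L + 1) * sqrt (v0 * c1) * exp ((\<gamma>/2 - 1/4) * real L)"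
  have SlS: "Sl \<le> S"
  proof -
    have "Sl = (\<Sum>k=0..L. sqrt (v0 * c1) * exp ((\<gamma>/2 - 1/4) * real L))"
      unfolding Sl_def by simp
    also have "\<dots> \<le> (\<Sum>k=0..L. sqrt (V k * C k))"
    proof (rule sum_mono)
      fix k assume k: "k \<in> {0..L}"
      have "sqrt (v0 * c1) * exp ((\<gamma>/2 - 1/4) * real L) \<le> sqrt (v0 * c1) * exp ((\<gamma>/2 - 1/4) * real k)"
      proof (intro mult_left_mono)
        show "0 \<le> sqrt (v0 * c1)" using v0 c1 by simp
        have "(\<gamma>/2 - 1/4) * real L \<le> (\<gamma>/2 - 1/4) * real k"
          using k \<gamma> by (intro mult_left_mono_neg) auto
        thus "exp ((\<gamma>/2 - 1/4) * real L) \<le> exp ((\<gamma>/2 - 1/4) * real k)" by simp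
      qed
      also have "\<dots> = sqrt ((v0 * exp (- real k / 2)) * (c1 * exp (\<gamma> * real k)))"
        by (simp add: real_sqrt_mult sqrt_exp exp_add[symmetric] mult_ac field_simps)
      also have "\<dots> \<le> sqrt (V k * C k)"
        using Vlow[of k] Clow[of k] v0 c1 Vpos[of k] by (intro real_sqrt_le_mono mult_mono) auto
      finally show "sqrt (v0 * c1) * exp ((\<gamma>/2 - 1/4) * real L) \<le> sqrt (V k * C k)" .
    qed
    finally show ?thesis unfolding S_def mlmc_S_def .
  qed
  have Slpos: "0 < Sl" unfolding Sl_def using v0 c1 by simp
  have step3: "2 * e\<^sup>2 * A / (S * sqrt (V 0 * C 0)) \<le> 2 * e\<^sup>2 * A' / (Sl * sqrt (V 0 * C 0))"
    using AA' SlS Slpos V0C0 e Vpos[of l] Cpos[of l] C1pos v0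
    by (intro frac_le mult_left_mono mult_right_mono) (auto simp: A_def A'_def)
  have step4: "2 * e\<^sup>2 * A' / (Sl * sqrt (V 0 * C 0)) =
     2 * C1 / (v0 * sqrt (v0 * c1) * sqrt (V 0 * C 0)) * (e\<^sup>2 * exp ((5/4 + \<gamma>/2) * real L)) / (real L + 1)"
  proof -
    define E1 where "E1 = exp ((5/4 + \<gamma>/2) * real L)"
    define E2 where "E2 = exp ((\<gamma>/2 - 1/4) * real L)"
    have E2: "0 < E2" unfolding E2_def by simp
    have "exp ((1 + \<gamma>) * real L) = E1 * E2"
      unfolding E1_def E2_def by (simp add: exp_add[symmetric] algebra_simps)
    hence a: "A' = C1 / v0 * (E1 * E2)" unfolding A'_def by simp
    have b: "Sl = (real L + 1) * sqrt (v0 * c1) * E2" unfolding Sl_def E2_def ..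
    have p: "0 < real L + 1" "0 < sqrt (v0 * c1)" using v0 c1 by auto
    have gen: "\<And>Lp q r. 0 < Lp \<Longrightarrow> 0 < q \<Longrightarrow> 0 < r \<Longrightarrow>
       2 * e\<^sup>2 * (C1 / v0 * (E1 * E2)) / (Lp * q * E2 * r) = 2 * C1 / (v0 * q * r) * (e\<^sup>2 * E1) / Lp"
      using v0 E2 by (simp add: field_simps)
    show ?thesis unfolding a b E1_def[symmetric] using gen[OF p V0C0] .
  qed
  have step5: "e\<^sup>2 * exp ((5/4 + \<gamma>/2) * real L) \<le> ca^2 * exp (3/2)"
  proof -
    have eb: "e \<le> ca * exp (- 3/4 * (real L - 1))" using mlmc_L_facts(2)[OF ca e eL] by (simp add: L_def)
    have "e\<^sup>2 \<le> (ca * exp (- 3/4 * (real L - 1)))^2" using eb e by (intro power_mono) auto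
    also have "\<dots> = ca^2 * exp (3/2) * exp (- 3/2 * real L)"
      by (simp add: power_mult_distrib exp_add[symmetric] power2_eq_square algebra_simps)
    finally have "e\<^sup>2 * exp ((5/4 + \<gamma>/2) * real L) \<le> ca^2 * exp (3/2) * exp (- 3/2 * real L) * exp ((5/4 + \<gamma>/2) * real L)"
      by (intro mult_right_mono) auto
    also have "\<dots> = ca^2 * exp (3/2) * exp ((\<gamma>/2 - 1/4) * real L)"
      by (simp add: exp_add[symmetric] algebra_simps)
    also have "\<dots> \<le> ca^2 * exp (3/2) * 1"
      using \<gamma> by (intro mult_left_mono) (auto intro!: mult_nonpos_nonneg)
    finally show ?thesis by simp
  qed
  have K0: "0 \<le> 2 * C1 / (v0 * sqrt (v0 * c1) * sqrt (V 0 * C 0))" using C1pos v0 c1 V0C0 by simp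
  have "exp (real l / 2) / ((Mk l)^2 * s2) \<le>
      2 * C1 / (v0 * sqrt (v0 * c1) * sqrt (V 0 * C 0)) * (ca^2 * exp (3/2)) / (real L + 1)"
    using step1 step2 step3 step4 step5 K0
    by (smt (verit, best) divide_right_mono mult_left_mono of_nat_0_le_iff)
  thus ?thesis unfolding Mk_def s2_def L_def .
qed



definition pp :: "nat \<Rightarrow> real" where "pp k = (1 - exp (-1)) * exp (- real k)"
definition aa :: "nat \<Rightarrow> real" where "aa k = exp (real k / 4)"

lemma pp_pos: "0 < pp k" unfolding pp_def by simp
lemma pp_le: "pp k \<le> 1 - exp (-1)"
  unfolding pp_def by (simp add: mult_le_cancel_left1)
lemma pp_lt1: "pp k < 1" using pp_le[of k] exp_gt_zero[of "-1"] by linarith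
lemma aa_pos: "0 < aa k" unfolding aa_def by simp
lemma aa_sq: "(aa k)^2 = exp (real k / 2)"
  unfolding aa_def by (simp add: power2_eq_square exp_add[symmetric])
lemma aa_pp: "aa k * pp k = (1 - exp (-1)) * exp (-3/4) ^ k"
  unfolding aa_def pp_def by (simp add: exp_of_nat_mult[symmetric] exp_add[symmetric] algebra_simps)
lemma aa2_pp: "(aa k)^2 * pp k = (1 - exp (-1)) * exp (- real k / 2)"
  unfolding aa_sq pp_def by (simp add: exp_add[symmetric] algebra_simps)

lemma exdX_eq: "exdX \<Omega> l \<omega> = aa l * indicator (\<Omega> l) \<omega>"
  by (cases l) (simp_all add: exdX_def exXl_def aa_def)

lemma exXl_eq: "exXl \<Omega> L \<omega> = (\<Sum>l=0..L. exdX \<Omega> l \<omega>)"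
  by (simp add: exXl_def exdX_eq aa_def)

locale exmod = prob_space M for M :: "'a measure" +
  fixes \<Omega> :: "nat \<Rightarrow> 'a set"
  assumes \<Omega>s[measurable]: "\<And>k. \<Omega> k \<in> sets M"
    and disj: "disjoint_family \<Omega>"
    and mes: "\<And>k. measure M (\<Omega> k) = (1 - exp (-1)) * exp (- real k)"
begin

lemma mes': "prob (\<Omega> k) = pp k" using mes by (simp add: pp_def)

lemma exdX_meas[measurable]: "exdX \<Omega> l \<in> borel_measurable M"
  unfolding exdX_eq[abs_def] by measurable

lemma ind_int[simp]: "integrable M (indicator (\<Omega> k) :: 'a \<Rightarrow> real)"
  by (intro integrable_real_indicator) (simp_all add: less_top[symmetric])

lemma exdX_int: "integrable M (exdX \<Omega> l)"
  unfolding exdX_eq[abs_def] by (intro integrable_mult_right ind_int)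

lemma E_exdX: "expectation (exdX \<Omega> l) = aa l * pp l"
  unfolding exdX_eq[abs_def] by (simp add: mes')

lemma sq_ind: "(a * indicator A \<omega> - m)^2 = (a^2 - 2*a*m) * indicator A \<omega> + m^2" for a m :: real
  by (cases "\<omega> \<in> A") (simp_all add: power2_eq_square algebra_simps)

lemma V_exdX: "variance (exdX \<Omega> l) = (aa l)^2 * pp l * (1 - pp l)"
proof -
  have "variance (exdX \<Omega> l) = expectation (\<lambda>\<omega>. ((aa l)^2 - 2 * aa l * (aa l * pp l)) * indicator (\<Omega> l) \<omega> + (aa l * pp l)^2)"
    by (simp add: E_exdX exdX_eq sq_ind)
  also have "\<dots> = ((aa l)^2 - 2 * aa l * (aa l * pp l)) * pp l + (aa l * pp l)^2"
    by (subst Bochner_Integration.integral_add) (auto simp: mes' prob_space)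
  finally show ?thesis by (simp add: power2_eq_square algebra_simps)
qed

lemma V_exdX': "variance (exdX \<Omega> l) = (1 - exp (-1)) * exp (- real l / 2) * (1 - pp l)"
  unfolding V_exdX aa2_pp ..

lemma V_pos: "0 < variance (exdX \<Omega> l)"
  unfolding V_exdX using pp_pos[of l] pp_lt1[of l] aa_pos[of l] by (intro mult_pos_pos) auto

lemma V_lower: "(1 - exp (-1)) * exp (-1) * exp (- real l / 2) \<le> variance (exdX \<Omega> l)"
proof -
  have "exp (-1) \<le> 1 - pp l" using pp_le[of l] by simp
  thus ?thesis unfolding V_exdX' by (simp add: mult_left_mono mult.commute mult.left_commute)
qed

lemma V_upper: "variance (exdX \<Omega> l) < exp (- real l / 2)"
proof -
  have "(1 - exp (-1)) * (1 - pp l) \<le> (1 - exp (-1))"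
    using pp_pos[of l] mult_left_mono[of "1 - pp l" 1 "1 - exp(-1)"] by simp
  hence "(1 - exp (-1)) * (1 - pp l) < 1" using exp_gt_zero[of "-1"] by linarith
  thus ?thesis unfolding V_exdX' by (simp add: mult.commute mult.left_commute)
qed


lemma hit_unique: "\<omega> \<in> \<Omega> j \<Longrightarrow> \<omega> \<in> \<Omega> k \<Longrightarrow> j = k"
  using disj unfolding disjoint_family_on_def by blast

lemma fin_hit: "finite {k. \<omega> \<in> \<Omega> (k + m)}"
proof (cases "\<exists>j. \<omega> \<in> \<Omega> j")
  case True
  then obtain j where j: "\<omega> \<in> \<Omega> j" by blast
  have "{k. \<omega> \<in> \<Omega> (k + m)} \<subseteq> {..j}" using hit_unique[OF j] by fastforce
  thus ?thesis by (rule finite_subset) simp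
next
  case False thus ?thesis by simp
qed

lemma summ_shift: "summable (\<lambda>k. aa (k + m) * indicator (\<Omega> (k + m)) \<omega>)"
  by (rule summable_finite[OF fin_hit[of \<omega> m]]) simp

lemma exX_minus: "exX \<Omega> \<omega> - exXl \<Omega> l \<omega> = (\<Sum>k. aa (k + Suc l) * indicator (\<Omega> (k + Suc l)) \<omega>)"
proof -
  have s: "summable (\<lambda>k. aa k * indicator (\<Omega> k) \<omega>)" using summ_shift[of 0 \<omega>] by simp
  have "exX \<Omega> \<omega> = (\<Sum>k. aa (k + Suc l) * indicator (\<Omega> (k + Suc l)) \<omega>) + (\<Sum>i<Suc l. aa i * indicator (\<Omega> i) \<omega>)"
    unfolding exX_def aa_def[symmetric] by (rule suminf_split_initial_segment[OF s])
  moreover have "exXl \<Omega> l \<omega> = (\<Sum>i<Suc l. aa i * indicator (\<Omega> i) \<omega>)"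
    unfolding exXl_def aa_def[symmetric] by (simp add: atLeast0AtMost lessThan_Suc_atMost)
  ultimately show ?thesis by simp
qed

definition "qq = exp (-3/4 :: real)"
lemma qq_pos: "0 < qq" and qq_lt1: "qq < 1" unfolding qq_def by auto

lemma bias: "expectation (\<lambda>\<omega>. exX \<Omega> \<omega> - exXl \<Omega> l \<omega>)
   = ((1 - exp (-1)) * qq / (1 - qq)) * exp (- 3 * real l / 4)"
proof -
  define g where "g = (\<lambda>k \<omega>. aa (k + Suc l) * indicator (\<Omega> (k + Suc l)) \<omega>)"
  have gi: "integrable M (g k)" for k unfolding g_def by (intro integrable_mult_right ind_int)
  have gE': "expectation (g k) = (1 - exp (-1)) * qq ^ (k + Suc l)" for k
    by (simp add: g_def mes' aa_pp qq_def)
  have gE: "expectation (\<lambda>\<omega>. norm (g k \<omega>)) = (1 - exp (-1)) * qq ^ (k + Suc l)" for k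
  proof -
    have "(\<lambda>\<omega>. norm (g k \<omega>)) = g k" by (auto simp: g_def abs_mult abs_of_pos[OF aa_pos] fun_eq_iff)
    thus ?thesis using gE'[of k] by simp
  qed
  have sq: "summable (\<lambda>k. qq ^ (k + Suc l))"
    using qq_pos qq_lt1 by (simp add: power_add summable_geometric summable_mult2)
  have "expectation (\<lambda>\<omega>. exX \<Omega> \<omega> - exXl \<Omega> l \<omega>) = expectation (\<lambda>\<omega>. \<Sum>k. g k \<omega>)"
    by (simp add: exX_minus g_def)
  also have "\<dots> = (\<Sum>k. expectation (g k))"
  proof (rule integral_suminf)
    show "AE x in M. summable (\<lambda>i. norm (g i x))"
    proof (rule AE_I2)
      fix x show "summable (\<lambda>i. norm (g i x))"
        using summ_shift[of "Suc l" x] by (simp add: g_def abs_mult abs_of_pos[OF aa_pos])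
    qed
    show "summable (\<lambda>i. expectation (\<lambda>x. norm (g i x)))"
      unfolding gE by (intro summable_mult sq)
  qed (rule gi)
  also have "\<dots> = (\<Sum>k. (1 - exp (-1)) * qq ^ Suc l * qq ^ k)"
    unfolding gE' by (simp add: power_add mult_ac)
  also have "\<dots> = (1 - exp (-1)) * qq ^ Suc l * (1 / (1 - qq))"
    using qq_pos qq_lt1 by (subst suminf_mult) (auto simp: suminf_geometric summable_geometric)
  also have "qq ^ Suc l = qq * exp (- 3 * real l / 4)"
    by (simp add: qq_def exp_of_nat_mult[symmetric] mult_ac)
  finally show ?thesis by simp
qed

lemma bias_pos: "0 < (1 - exp (-1)) * qq / (1 - qq)"
  using qq_pos qq_lt1 by simp

lemma Y_eq: "(exdX \<Omega> l \<omega> - expectation (exdX \<Omega> l))\<^sup>2 / variance (exdX \<Omega> l)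
   = (if \<omega> \<in> \<Omega> l then (1 - pp l) / pp l else pp l / (1 - pp l))"
proof -
  have a: "aa l \<noteq> 0" and p: "pp l \<noteq> 0" and q: "1 - pp l \<noteq> 0"
    using aa_pos[of l] pp_pos[of l] pp_lt1[of l] by auto
  show ?thesis unfolding V_exdX unfolding E_exdX exdX_eq
    using a p q by (simp add: field_simps power2_eq_square)
qed

lemma Y_nn: "0 \<le> (exdX \<Omega> l \<omega> - expectation (exdX \<Omega> l))\<^sup>2 / variance (exdX \<Omega> l)"
  using V_pos by simp

lemma tail_E: "expectation (\<lambda>\<omega>. ((exdX \<Omega> l \<omega> - expectation (exdX \<Omega> l))\<^sup>2 / variance (exdX \<Omega> l)) *
    indicator {\<omega>\<in>space M. (exdX \<Omega> l \<omega> - expectation (exdX \<Omega> l))\<^sup>2 / variance (exdX \<Omega> l) > x} \<omega>)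
  = (if (1 - pp l) / pp l > x then 1 - pp l else 0) + (if pp l / (1 - pp l) > x then pp l else 0)"
proof -
  define A where "A = (if (1 - pp l) / pp l > x then (1 - pp l) / pp l else 0)"
  define B where "B = (if pp l / (1 - pp l) > x then pp l / (1 - pp l) else 0)"
  have "expectation (\<lambda>\<omega>. ((exdX \<Omega> l \<omega> - expectation (exdX \<Omega> l))\<^sup>2 / variance (exdX \<Omega> l)) *
    indicator {\<omega>\<in>space M. (exdX \<Omega> l \<omega> - expectation (exdX \<Omega> l))\<^sup>2 / variance (exdX \<Omega> l) > x} \<omega>)
    = expectation (\<lambda>\<omega>. (A - B) * indicator (\<Omega> l) \<omega> + B)"
    by (rule Bochner_Integration.integral_cong[OF refl]) (auto simp: Y_eq A_def B_def indicator_def)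
  also have "\<dots> = (A - B) * pp l + B"
    by (subst Bochner_Integration.integral_add) (auto simp: mes' prob_space)
  also have "\<dots> = A * pp l + B * (1 - pp l)" by (simp add: algebra_simps)
  finally show ?thesis
    using pp_pos[of l] pp_lt1[of l] by (simp add: A_def B_def)
qed

lemma pp_lim: "pp \<longlonglongrightarrow> 0"
proof -
  have eq: "pp = (\<lambda>k. (1 - exp (-1)) * exp (-1::real) ^ k)"
    by (simp add: fun_eq_iff pp_def exp_of_nat_mult[symmetric])
  have "(\<lambda>k. (1 - exp (-1)) * exp (-1::real) ^ k) \<longlonglongrightarrow> (1 - exp (-1)) * 0"
    by (rule tendsto_mult[OF tendsto_const LIMSEQ_power_zero]) (simp add: real_norm_def)
  thus ?thesis unfolding eq by simp
qed

end

locale mlmc = exmod M \<Omega> for M :: "'a measure" and \<Omega> +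
  fixes N :: "'b measure" and D :: "real \<Rightarrow> nat \<Rightarrow> nat \<Rightarrow> 'b \<Rightarrow> real" and C :: "nat \<Rightarrow> real" and ca :: real
  assumes PN: "prob_space N" and Cpos: "\<And>l. 0 < C l" and ca: "0 < ca"
    and DD: "\<And>\<epsilon>. 0 < \<epsilon> \<Longrightarrow> prob_space.indep_vars N (\<lambda>_. borel) (\<lambda>(l, i). D \<epsilon> l i) UNIV"
    and Ddist: "\<And>\<epsilon> l i. 0 < \<epsilon> \<Longrightarrow> distr N borel (D \<epsilon> l i) = distr M borel (exdX \<Omega> l)"
begin

interpretation N: prob_space N by (rule PN)

abbreviation "VV \<equiv> (\<lambda>l. variance (exdX \<Omega> l))"
definition "LL \<epsilon> = mlmc_L ca (3/4) \<epsilon>"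
definition "MM \<epsilon> l = mlmc_M VV C ca (3/4) \<epsilon> l"
definition "II \<epsilon> = Sigma {0..LL \<epsilon>} (\<lambda>l. {1..MM \<epsilon> l})"
definition "WW \<epsilon> j \<omega> = (D \<epsilon> (fst j) (snd j) \<omega> - aa (fst j) * pp (fst j)) / real (MM \<epsilon> (fst j))"
definition "s2 \<epsilon> = (\<Sum>l=0..LL \<epsilon>. VV l / real (MM \<epsilon> l))"

lemma MM_ge1: "1 \<le> MM \<epsilon> l"
  unfolding MM_def mlmc_M_def by simp

lemma finite_II: "finite (II \<epsilon>)" unfolding II_def by auto

lemma D_meas[measurable]: "0 < \<epsilon> \<Longrightarrow> D \<epsilon> l i \<in> borel_measurable N"
  using DD[of \<epsilon>] unfolding N.indep_vars_def2 by auto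

lemma D_transfer:
  fixes g :: "real \<Rightarrow> real"
  assumes e: "0 < \<epsilon>" and g[measurable]: "g \<in> borel_measurable borel"
  shows "N.expectation (\<lambda>\<omega>. g (D \<epsilon> l i \<omega>)) = expectation (\<lambda>\<omega>. g (exdX \<Omega> l \<omega>))"
    and "integrable N (\<lambda>\<omega>. g (D \<epsilon> l i \<omega>)) \<longleftrightarrow> integrable M (\<lambda>\<omega>. g (exdX \<Omega> l \<omega>))"
proof -
  note [measurable] = D_meas[OF e]
  have "N.expectation (\<lambda>\<omega>. g (D \<epsilon> l i \<omega>)) = integral\<^sup>L (distr N borel (D \<epsilon> l i)) g"
    by (rule integral_distr[of "D \<epsilon> l i" N borel g, symmetric]) auto
  also have "\<dots> = integral\<^sup>L (distr M borel (exdX \<Omega> l)) g" by (simp add: Ddist[OF e])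
  also have "\<dots> = expectation (\<lambda>\<omega>. g (exdX \<Omega> l \<omega>))" by (rule integral_distr[of "exdX \<Omega> l" M borel g]) auto
  finally show "N.expectation (\<lambda>\<omega>. g (D \<epsilon> l i \<omega>)) = expectation (\<lambda>\<omega>. g (exdX \<Omega> l \<omega>))" .
  have "integrable N (\<lambda>\<omega>. g (D \<epsilon> l i \<omega>)) \<longleftrightarrow> integrable (distr N borel (D \<epsilon> l i)) g"
    by (rule integrable_distr_eq[of "D \<epsilon> l i" N borel g, symmetric]) auto
  also have "\<dots> \<longleftrightarrow> integrable (distr M borel (exdX \<Omega> l)) g" by (simp add: Ddist[OF e])
  also have "\<dots> \<longleftrightarrow> integrable M (\<lambda>\<omega>. g (exdX \<Omega> l \<omega>))" by (rule integrable_distr_eq[of "exdX \<Omega> l" M borel g]) auto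
  finally show "integrable N (\<lambda>\<omega>. g (D \<epsilon> l i \<omega>)) \<longleftrightarrow> integrable M (\<lambda>\<omega>. g (exdX \<Omega> l \<omega>))" .
qed

lemma D_AE:
  assumes e: "0 < \<epsilon>"
  shows "AE \<omega> in N. \<bar>D \<epsilon> l i \<omega> - aa l * pp l\<bar> \<le> aa l"
proof -
  note [measurable] = D_meas[OF e]
  have "AE x in distr M borel (exdX \<Omega> l). \<bar>x - aa l * pp l\<bar> \<le> aa l"
  proof (subst AE_distr_iff)
    show "AE x in M. \<bar>exdX \<Omega> l x - aa l * pp l\<bar> \<le> aa l"
    proof (rule AE_I2)
      fix x
      have "0 \<le> aa l * pp l" "aa l * pp l \<le> aa l"
        using aa_pos[of l] pp_pos[of l] pp_lt1[of l] by (auto simp: mult_le_cancel_left1)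
      thus "\<bar>exdX \<Omega> l x - aa l * pp l\<bar> \<le> aa l"
        by (auto simp: exdX_eq indicator_def)
    qed
  qed auto
  hence "AE x in distr N borel (D \<epsilon> l i). \<bar>x - aa l * pp l\<bar> \<le> aa l" by (subst Ddist[OF e])
  thus ?thesis by (subst (asm) AE_distr_iff) auto
qed

lemma exdX_sq_int: "integrable M (\<lambda>\<omega>. (exdX \<Omega> l \<omega> - m)\<^sup>2)"
proof -
  have "(\<lambda>\<omega>. (exdX \<Omega> l \<omega> - m)\<^sup>2) = (\<lambda>\<omega>. ((aa l)^2 - 2 * aa l * m) * indicator (\<Omega> l) \<omega> + m^2)"
    by (simp add: exdX_eq sq_ind)
  thus ?thesis by simp
qed

lemma WW_facts:
  assumes e: "0 < \<epsilon>"
  shows "integrable N (\<lambda>\<omega>. (WW \<epsilon> j \<omega>)\<^sup>2)"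
    and "N.expectation (WW \<epsilon> j) = 0"
    and "N.expectation (\<lambda>\<omega>. (WW \<epsilon> j \<omega>)\<^sup>2) = VV (fst j) / (real (MM \<epsilon> (fst j)))^2"
    and "AE \<omega> in N. \<bar>WW \<epsilon> j \<omega>\<bar> \<le> aa (fst j) / real (MM \<epsilon> (fst j))"
    and "WW \<epsilon> j \<in> borel_measurable N"
proof -
  obtain l i where j: "j = (l, i)" by force
  define m where "m = real (MM \<epsilon> l)"
  have m: "1 \<le> m" unfolding m_def using MM_ge1 by simp
  note [measurable] = D_meas[OF e]
  have W: "WW \<epsilon> j = (\<lambda>\<omega>. (D \<epsilon> l i \<omega> - aa l * pp l) / m)"
    unfolding WW_def j m_def by (simp add: fun_eq_iff)
  show "WW \<epsilon> j \<in> borel_measurable N" unfolding W by measurable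
  have i1: "integrable N (\<lambda>\<omega>. D \<epsilon> l i \<omega>)"
    using D_transfer(2)[OF e, of "\<lambda>x. x" l i] exdX_int by simp
  have E1: "N.expectation (\<lambda>\<omega>. D \<epsilon> l i \<omega>) = aa l * pp l"
    using D_transfer(1)[OF e, of "\<lambda>x. x" l i] E_exdX by simp
  have i2: "integrable N (\<lambda>\<omega>. (D \<epsilon> l i \<omega> - aa l * pp l)\<^sup>2)"
    using D_transfer(2)[OF e, of "\<lambda>x. (x - aa l * pp l)\<^sup>2" l i] exdX_sq_int by simp
  have E2: "N.expectation (\<lambda>\<omega>. (D \<epsilon> l i \<omega> - aa l * pp l)\<^sup>2) = VV l"
    using D_transfer(1)[OF e, of "\<lambda>x. (x - aa l * pp l)\<^sup>2" l i] E_exdX by simp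
  have sq: "(\<lambda>\<omega>. (WW \<epsilon> j \<omega>)\<^sup>2) = (\<lambda>\<omega>. (D \<epsilon> l i \<omega> - aa l * pp l)\<^sup>2 / m^2)"
    unfolding W by (simp add: power_divide)
  show "integrable N (\<lambda>\<omega>. (WW \<epsilon> j \<omega>)\<^sup>2)" unfolding sq using i2 by simp
  show "N.expectation (WW \<epsilon> j) = 0" unfolding W using i1 E1 by (simp add: N.prob_space)
  show "N.expectation (\<lambda>\<omega>. (WW \<epsilon> j \<omega>)\<^sup>2) = VV (fst j) / (real (MM \<epsilon> (fst j)))^2"
    unfolding sq using E2 by (simp add: j m_def)
  show "AE \<omega> in N. \<bar>WW \<epsilon> j \<omega>\<bar> \<le> aa (fst j) / real (MM \<epsilon> (fst j))"
    using D_AE[OF e, of l i]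
  proof (rule eventually_mono)
    fix \<omega> assume "\<bar>D \<epsilon> l i \<omega> - aa l * pp l\<bar> \<le> aa l"
    thus "\<bar>WW \<epsilon> j \<omega>\<bar> \<le> aa (fst j) / real (MM \<epsilon> (fst j))"
      unfolding W using m by (simp add: j m_def divide_right_mono)
  qed
qed

lemma WW_indep:
  assumes e: "0 < \<epsilon>"
  shows "N.indep_vars (\<lambda>_. borel) (WW \<epsilon>) (II \<epsilon>)"
proof -
  have "N.indep_vars (\<lambda>_. borel) (\<lambda>j x. (\<lambda>y. (y - aa (fst j) * pp (fst j)) / real (MM \<epsilon> (fst j))) ((\<lambda>(l, i). D \<epsilon> l i) j x)) UNIV"
    by (rule N.indep_vars_compose2[OF DD[OF e]]) auto
  hence "N.indep_vars (\<lambda>_. borel) (WW \<epsilon>) UNIV"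
    by (rule N.indep_vars_cong[THEN iffD1, rotated 3]) (auto simp: WW_def fun_eq_iff split: prod.splits)
  thus ?thesis by (rule N.indep_vars_subset) simp
qed

lemma est_eq:
  "mlmc_est VV C ca (3/4) \<epsilon> (D \<epsilon>) \<omega> - expectation (exXl \<Omega> (LL \<epsilon>)) = (\<Sum>j\<in>II \<epsilon>. WW \<epsilon> j \<omega>)"
proof -
  have Ex: "expectation (exXl \<Omega> (LL \<epsilon>)) = (\<Sum>l=0..LL \<epsilon>. aa l * pp l)"
    unfolding exXl_eq[abs_def]
    by (subst Bochner_Integration.integral_sum) (auto simp: exdX_int E_exdX)
  have "(\<Sum>j\<in>II \<epsilon>. WW \<epsilon> j \<omega>) = (\<Sum>l=0..LL \<epsilon>. \<Sum>i=1..MM \<epsilon> l. (D \<epsilon> l i \<omega> - aa l * pp l) / real (MM \<epsilon> l))"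
    unfolding II_def WW_def by (subst sum.Sigma) (auto simp: split_beta)
  also have "\<dots> = (\<Sum>l=0..LL \<epsilon>. (1 / real (MM \<epsilon> l)) * (\<Sum>i=1..MM \<epsilon> l. D \<epsilon> l i \<omega>) - aa l * pp l)"
  proof (rule sum.cong[OF refl])
    fix l
    have m: "real (MM \<epsilon> l) \<noteq> 0" using MM_ge1[of \<epsilon> l] by simp
    show "(\<Sum>i=1..MM \<epsilon> l. (D \<epsilon> l i \<omega> - aa l * pp l) / real (MM \<epsilon> l)) =
        (1 / real (MM \<epsilon> l)) * (\<Sum>i=1..MM \<epsilon> l. D \<epsilon> l i \<omega>) - aa l * pp l"
      using m by (simp add: sum_divide_distrib[symmetric] sum_subtractf diff_divide_distrib)
  qed
  also have "\<dots> = mlmc_est VV C ca (3/4) \<epsilon> (D \<epsilon>) \<omega> - (\<Sum>l=0..LL \<epsilon>. aa l * pp l)"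
    unfolding mlmc_est_def LL_def MM_def by (simp add: sum_subtractf)
  finally show ?thesis using Ex by simp
qed

lemma s2_pos: "0 < s2 \<epsilon>"
proof -
  have "0 < VV 0 / real (MM \<epsilon> 0)" using V_pos[of 0] MM_ge1[of \<epsilon> 0] by simp
  also have "\<dots> \<le> s2 \<epsilon>" unfolding s2_def
    by (rule member_le_sum) (auto intro!: divide_nonneg_nonneg less_imp_le[OF V_pos])
  finally show ?thesis .
qed

lemma sumW2:
  assumes e: "0 < \<epsilon>"
  shows "(\<Sum>j\<in>II \<epsilon>. N.expectation (\<lambda>\<omega>. (WW \<epsilon> j \<omega>)\<^sup>2)) = s2 \<epsilon>"
proof -
  have "(\<Sum>j\<in>II \<epsilon>. N.expectation (\<lambda>\<omega>. (WW \<epsilon> j \<omega>)\<^sup>2)) = (\<Sum>j\<in>II \<epsilon>. VV (fst j) / (real (MM \<epsilon> (fst j)))^2)"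
    using WW_facts(3)[OF e] by simp
  also have "\<dots> = (\<Sum>l=0..LL \<epsilon>. \<Sum>i=1..MM \<epsilon> l. VV l / (real (MM \<epsilon> l))^2)"
    unfolding II_def by (subst sum.Sigma) (auto simp: split_beta)
  also have "\<dots> = s2 \<epsilon>" unfolding s2_def
  proof (rule sum.cong[OF refl])
    fix l
    have m: "real (MM \<epsilon> l) \<noteq> 0" using MM_ge1[of \<epsilon> l] by simp
    show "(\<Sum>i=1..MM \<epsilon> l. VV l / (real (MM \<epsilon> l))^2) = VV l / real (MM \<epsilon> l)"
      using m by (simp add: power2_eq_square)
  qed
  finally show ?thesis .
qed

lemma var_est:
  assumes e: "0 < \<epsilon>"
  shows "N.variance (mlmc_est VV C ca (3/4) \<epsilon> (D \<epsilon>)) = s2 \<epsilon>"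
proof -
  define m where "m = expectation (exXl \<Omega> (LL \<epsilon>))"
  have est: "mlmc_est VV C ca (3/4) \<epsilon> (D \<epsilon>) = (\<lambda>\<omega>. m + (\<Sum>j\<in>II \<epsilon>. WW \<epsilon> j \<omega>))"
    using est_eq[of \<epsilon>] by (simp add: fun_eq_iff m_def algebra_simps)
  have rv: "j \<in> II \<epsilon> \<Longrightarrow> WW \<epsilon> j \<in> borel_measurable N" for j using WW_facts(5)[OF e] .
  have intW: "j \<in> II \<epsilon> \<Longrightarrow> integrable N (WW \<epsilon> j)" for j
    by (rule N.square_integrable_imp_integrable[OF rv WW_facts(1)[OF e]])
  have ES: "N.expectation (\<lambda>\<omega>. m + (\<Sum>j\<in>II \<epsilon>. WW \<epsilon> j \<omega>)) = m"
    using intW WW_facts(2)[OF e] by (simp add: Bochner_Integration.integral_sum N.prob_space)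
  note VS = N.var_sum_indep[OF finite_II WW_indep[OF e] WW_facts(1)[OF e] WW_facts(2)[OF e]]
  have "N.variance (mlmc_est VV C ca (3/4) \<epsilon> (D \<epsilon>)) = (\<Sum>j\<in>II \<epsilon>. N.expectation (\<lambda>\<omega>. (WW \<epsilon> j \<omega>)\<^sup>2))"
    unfolding est ES using VS by simp
  also have "\<dots> = s2 \<epsilon>" by (rule sumW2[OF e])
  finally show ?thesis .
qed


theorem part5:
  assumes \<gamma>0: "0 < \<gamma>" and \<gamma>1: "\<gamma> \<le> 1/2" and Th: "Theta C (\<lambda>l. exp (\<gamma> * real l))"
  shows "conv_distr_at_0 N (\<lambda>\<epsilon> \<omega>. (mlmc_est VV C ca (3/4) \<epsilon> (D \<epsilon>) \<omega> - expectation (exXl \<Omega> (mlmc_L ca (3/4) \<epsilon>)))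
            / sqrt (N.variance (mlmc_est VV C ca (3/4) \<epsilon> (D \<epsilon>))))"
  unfolding conv_distr_at_0_def
proof (intro allI impI)
  fix es :: "nat \<Rightarrow> real" assume pos: "\<forall>n. 0 < es n" and lim: "es \<longlonglongrightarrow> 0"
  obtain c1 C1 where c1: "0 < c1" "c1 < C1"
    and cb: "\<And>l. c1 * \<bar>exp (\<gamma> * real l)\<bar> < \<bar>C l\<bar> \<and> \<bar>C l\<bar> < C1 * \<bar>exp (\<gamma> * real l)\<bar>"
    using Th unfolding Theta_def by blast
  have Clow: "c1 * exp (\<gamma> * real l) \<le> C l" for l using cb[of l] Cpos[of l] by simp
  have Cup: "C l \<le> C1 * exp (\<gamma> * real l)" for l using cb[of l] Cpos[of l] by simp
  define v0 where "v0 = (1 - exp (-1)) * exp (-1::real)"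
  have v0: "0 < v0" unfolding v0_def by simp
  have Vlow: "v0 * exp (- real l / 2) \<le> VV l" for l unfolding v0_def by (rule V_lower)
  define K where "K = 2 * C1 / (v0 * sqrt (v0 * c1) * sqrt (VV 0 * C 0)) * (ca^2 * exp (3/2))"
  define Y where "Y n j \<omega> = WW (es n) j \<omega> / sqrt (s2 (es n))" for n j \<omega>
  define b where "b n = sqrt (K / (real (LL (es n)) + 1))" for n
  have s2p: "0 < s2 e" for e by (rule s2_pos)
  define \<delta> where "\<delta> = min (sqrt (VV 0)) (ca * exp (- 3/4))"
  have \<delta>: "0 < \<delta>" unfolding \<delta>_def using V_pos[of 0] ca by simp
  have small: "eventually (\<lambda>n. es n < \<delta>) sequentially"
    by (rule order_tendstoD(2)[OF lim \<delta>])
  have good: "eventually (\<lambda>n. (es n)^2 \<le> VV 0 \<and> 3/4 \<le> ln (ca / es n)) sequentially"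
    using small
  proof (rule eventually_mono)
    fix n assume h: "es n < \<delta>"
    have e: "0 < es n" using pos by simp
    have "es n \<le> sqrt (VV 0)" using h unfolding \<delta>_def by simp
    hence "(es n)^2 \<le> VV 0" using e V_pos[of 0]
      by (metis less_imp_le real_sqrt_le_iff real_sqrt_unique sqrt_le_D)
    moreover have "es n \<le> ca * exp (- 3/4)" using h unfolding \<delta>_def by simp
    hence "exp (3/4) \<le> ca / es n" using e by (simp add: field_simps exp_minus)
    hence "3/4 \<le> ln (ca / es n)" using e ca by (metis exp_gt_zero exp_le_cancel_iff exp_ln order_less_le_trans)
    ultimately show "(es n)^2 \<le> VV 0 \<and> 3/4 \<le> ln (ca / es n)" by simp
  qed
  have Z_eq: "(\<lambda>\<omega>. (mlmc_est VV C ca (3/4) (es n) (D (es n)) \<omega> - expectation (exXl \<Omega> (mlmc_L ca (3/4) (es n))))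
            / sqrt (N.variance (mlmc_est VV C ca (3/4) (es n) (D (es n)))))
        = (\<lambda>\<omega>. \<Sum>j\<in>II (es n). Y n j \<omega>)" for n
    using est_eq[of "es n"] var_est[of "es n"] pos
    by (simp add: fun_eq_iff Y_def LL_def sum_divide_distrib)
  have "weak_conv_m (\<lambda>n. distr N borel (\<lambda>\<omega>. \<Sum>j\<in>II (es n). Y n j \<omega>)) std_normal_distribution"
  proof (rule clt_triangular[OF PN])
    show "finite (II (es n))" for n by (rule finite_II)
    show "N.indep_vars (\<lambda>_. borel) (Y n) (II (es n))" for n
      unfolding Y_def[abs_def] using pos
      by (intro N.indep_vars_compose2[OF WW_indep, where Y="\<lambda>_ x. x / sqrt (s2 (es n))", simplified]) auto
    show "integrable N (\<lambda>\<omega>. (Y n j \<omega>)\<^sup>2)" for n j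
      unfolding Y_def using WW_facts(1)[of "es n" j] pos by (simp add: power_divide)
    show "N.expectation (Y n j) = 0" for n j
      unfolding Y_def using WW_facts(2)[of "es n" j] pos by simp
    show "(\<Sum>j\<in>II (es n). N.expectation (\<lambda>\<omega>. (Y n j \<omega>)\<^sup>2)) = 1" for n
    proof -
      have "(\<Sum>j\<in>II (es n). N.expectation (\<lambda>\<omega>. (Y n j \<omega>)\<^sup>2))
          = (\<Sum>j\<in>II (es n). N.expectation (\<lambda>\<omega>. (WW (es n) j \<omega>)\<^sup>2)) / s2 (es n)"
        unfolding Y_def using s2p[of "es n"] by (simp add: power_divide sum_divide_distrib)
      also have "\<dots> = 1" using sumW2[of "es n"] pos s2p[of "es n"] by simp
      finally show ?thesis .
    qed
    show "eventually (\<lambda>n. \<forall>j\<in>II (es n). AE \<omega> in N. \<bar>Y n j \<omega>\<bar> \<le> b n) sequentially"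
      using good
    proof (rule eventually_mono)
      fix n assume g: "(es n)^2 \<le> VV 0 \<and> 3/4 \<le> ln (ca / es n)"
      have e: "0 < es n" using pos by simp
      show "\<forall>j\<in>II (es n). AE \<omega> in N. \<bar>Y n j \<omega>\<bar> \<le> b n"
      proof
        fix j assume j: "j \<in> II (es n)"
        obtain l i where li: "j = (l, i)" by force
        have l: "l \<le> mlmc_L ca (3/4) (es n)" using j unfolding li II_def LL_def by auto
        have mb: "exp (real l / 2) / ((real (mlmc_M VV C ca (3/4) (es n) l))^2 *
           (\<Sum>k=0..mlmc_L ca (3/4) (es n). VV k / real (mlmc_M VV C ca (3/4) (es n) k)))
           \<le> K / (real (mlmc_L ca (3/4) (es n)) + 1)"
          unfolding K_def
          by (rule mlmc_bound[OF v0 Vlow c1(1) Clow Cup \<gamma>1 less_imp_le[OF \<gamma>0] ca e]) (use g l in auto)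
        define m where "m = real (MM (es n) l)"
        have m: "1 \<le> m" unfolding m_def using MM_ge1 by simp
        have bb: "aa l / (m * sqrt (s2 (es n))) \<le> b n"
          unfolding b_def
        proof (rule real_le_rsqrt)
          have "(aa l / (m * sqrt (s2 (es n))))^2 = exp (real l / 2) / (m^2 * s2 (es n))"
            using s2p[of "es n"] by (simp add: power_divide power_mult_distrib aa_sq)
          also have "\<dots> \<le> K / (real (LL (es n)) + 1)"
            using mb unfolding m_def MM_def s2_def LL_def .
          finally show "(aa l / (m * sqrt (s2 (es n))))^2 \<le> K / (real (LL (es n)) + 1)" .
        qed
        show "AE \<omega> in N. \<bar>Y n j \<omega>\<bar> \<le> b n"
          using WW_facts(4)[OF e, of j]
        proof (rule eventually_mono)
          fix \<omega> assume h: "\<bar>WW (es n) j \<omega>\<bar> \<le> aa (fst j) / real (MM (es n) (fst j))"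
          have "\<bar>Y n j \<omega>\<bar> = \<bar>WW (es n) j \<omega>\<bar> / sqrt (s2 (es n))"
            unfolding Y_def using s2p[of "es n"] by (simp add: abs_divide)
          also have "\<dots> \<le> aa l / m / sqrt (s2 (es n))"
            using h s2p[of "es n"] by (intro divide_right_mono) (auto simp: li m_def)
          also have "\<dots> = aa l / (m * sqrt (s2 (es n)))" by simp
          finally show "\<bar>Y n j \<omega>\<bar> \<le> b n" using bb by linarith
        qed
      qed
    qed
    show "b \<longlonglongrightarrow> 0"
    proof -
      have fr: "filterlim es (at_right 0) sequentially"
        by (rule tendsto_imp_filterlim_at_right[OF lim]) (use pos in auto)
      have "filterlim (\<lambda>x. ca * inverse x) at_top (at_right (0::real))"
        by (rule filterlim_tendsto_pos_mult_at_top[OF tendsto_const ca filterlim_inverse_at_top_right])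
      hence "filterlim (\<lambda>n. ca * inverse (es n)) at_top sequentially"
        by (rule filterlim_compose[OF _ fr])
      hence lnl: "filterlim (\<lambda>n. ln (ca * inverse (es n))) at_top sequentially"
        by (rule filterlim_compose[OF ln_at_top])
      have "filterlim (\<lambda>n. 4/3 * ln (ca * inverse (es n))) at_top sequentially"
        using filterlim_tendsto_pos_mult_at_top[OF tendsto_const[of "4/3::real"] _ lnl] by simp
      hence "filterlim (\<lambda>n. real (LL (es n)) + 1) at_top sequentially"
      proof (rule filterlim_at_top_mono)
        show "eventually (\<lambda>n. 4/3 * ln (ca * inverse (es n)) \<le> real (LL (es n)) + 1) sequentially"
          using good
        proof (rule eventually_mono)
          fix n assume g: "(es n)^2 \<le> VV 0 \<and> 3/4 \<le> ln (ca / es n)"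
          have "4/3 * ln (ca / es n) \<le> real (LL (es n))"
            unfolding LL_def by (rule mlmc_L_facts(1)[OF ca]) (use g pos in auto)
          thus "4/3 * ln (ca * inverse (es n)) \<le> real (LL (es n)) + 1" by (simp add: field_simps)
        qed
      qed
      hence "(\<lambda>n. K / (real (LL (es n)) + 1)) \<longlonglongrightarrow> 0"
        by (intro tendsto_divide_0[OF tendsto_const] filterlim_at_top_imp_at_infinity)
      hence "(\<lambda>n. sqrt (K / (real (LL (es n)) + 1))) \<longlonglongrightarrow> sqrt 0"
        by (rule tendsto_real_sqrt)
      thus ?thesis unfolding b_def by simp
    qed
  qed
  thus "weak_conv_m (\<lambda>n. distr N borel ((\<lambda>\<epsilon> \<omega>. (mlmc_est VV C ca (3/4) \<epsilon> (D \<epsilon>) \<omega> - expectation (exXl \<Omega> (mlmc_L ca (3/4) \<epsilon>)))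
            / sqrt (N.variance (mlmc_est VV C ca (3/4) \<epsilon> (D \<epsilon>)))) (es n))) std_normal_distribution"
    by (simp only: Z_eq)
qed

end

theorem mainTheorem7:
  fixes M :: "'a measure" and \<Omega> :: "nat \<Rightarrow> 'a set"
  assumes "prob_space M"
    and "\<And>k. \<Omega> k \<in> sets M"
    and "disjoint_family \<Omega>"
    and "\<And>k. measure M (\<Omega> k) = (1 - exp (-1)) * exp (- real k)"
  shows
    "Theta (\<lambda>l. \<bar>prob_space.expectation M (\<lambda>\<omega>. exX \<Omega> \<omega> - exXl \<Omega> l \<omega>)\<bar>)
           (\<lambda>l. exp (- 3 * real l / 4))
   \<and> Theta (\<lambda>l. prob_space.variance M (exdX \<Omega> l)) (\<lambda>l. exp (- real l / 2))
   \<and> (\<forall>x>1. (\<lambda>l. prob_space.expectation M (\<lambda>\<omega>.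
          ((exdX \<Omega> l \<omega> - prob_space.expectation M (exdX \<Omega> l))\<^sup>2 / prob_space.variance M (exdX \<Omega> l)) *
          indicator {\<omega>\<in>space M. (exdX \<Omega> l \<omega> - prob_space.expectation M (exdX \<Omega> l))\<^sup>2
                                   / prob_space.variance M (exdX \<Omega> l) > x} \<omega>)) \<longlonglongrightarrow> 1)
   \<and> \<not> unif_integrable M (\<lambda>l \<omega>. (exdX \<Omega> l \<omega> - prob_space.expectation M (exdX \<Omega> l))\<^sup>2
                                   / prob_space.variance M (exdX \<Omega> l))
   \<and> (\<forall>(\<gamma>::real) (C::nat \<Rightarrow> real) (c\<alpha>::real) (N::'b measure) (D::real \<Rightarrow> nat \<Rightarrow> nat \<Rightarrow> 'b \<Rightarrow> real).
        0 < \<gamma> \<longrightarrow> \<gamma> \<le> 1/2 \<longrightarrow> (\<forall>l. C l > 0) \<longrightarrow> Theta C (\<lambda>l. exp (\<gamma> * real l)) \<longrightarrow>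
        0 < c\<alpha> \<longrightarrow>
        (\<forall>l. \<bar>prob_space.expectation M (\<lambda>\<omega>. exX \<Omega> \<omega> - exXl \<Omega> l \<omega>)\<bar> \<le> c\<alpha> * exp (- 3/4 * real l)) \<longrightarrow>
        prob_space N \<longrightarrow>
        (\<forall>\<epsilon>>0. prob_space.indep_vars N (\<lambda>_. borel) (\<lambda>(l, i). D \<epsilon> l i) UNIV
                \<and> (\<forall>l i. distr N borel (D \<epsilon> l i) = distr M borel (exdX \<Omega> l))) \<longrightarrow>
        conv_distr_at_0 N (\<lambda>\<epsilon> \<omega>.
          (mlmc_est (\<lambda>l. prob_space.variance M (exdX \<Omega> l)) C c\<alpha> (3/4) \<epsilon> (D \<epsilon>) \<omega>
             - prob_space.expectation M (exXl \<Omega> (mlmc_L c\<alpha> (3/4) \<epsilon>)))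
          / sqrt (prob_space.variance N
                   (mlmc_est (\<lambda>l. prob_space.variance M (exdX \<Omega> l)) C c\<alpha> (3/4) \<epsilon> (D \<epsilon>)))))"
proof -
  interpret E: exmod M \<Omega> by (intro exmod.intro exmod_axioms.intro assms)
  define Kb where "Kb = (1 - exp (-1)) * E.qq / (1 - E.qq)"
  have Kb: "0 < Kb" unfolding Kb_def by (rule E.bias_pos)
  have P1: "Theta (\<lambda>l. \<bar>E.expectation (\<lambda>\<omega>. exX \<Omega> \<omega> - exXl \<Omega> l \<omega>)\<bar>) (\<lambda>l. exp (- 3 * real l / 4))"
    unfolding Theta_def
  proof (rule exI[of _ "Kb / 2"], rule exI[of _ "2 * Kb"], intro conjI allI)
    show "0 < Kb / 2" "Kb / 2 < 2 * Kb" using Kb by auto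
    fix l
    have eq: "\<bar>E.expectation (\<lambda>\<omega>. exX \<Omega> \<omega> - exXl \<Omega> l \<omega>)\<bar> = Kb * \<bar>exp (- 3 * real l / 4)\<bar>"
      unfolding E.bias Kb_def[symmetric] using Kb by (simp add: abs_mult)
    show "Kb / 2 * \<bar>exp (- 3 * real l / 4)\<bar> < \<bar>\<bar>E.expectation (\<lambda>\<omega>. exX \<Omega> \<omega> - exXl \<Omega> l \<omega>)\<bar>\<bar>"
      unfolding eq using Kb by simp
    show "\<bar>\<bar>E.expectation (\<lambda>\<omega>. exX \<Omega> \<omega> - exXl \<Omega> l \<omega>)\<bar>\<bar> < 2 * Kb * \<bar>exp (- 3 * real l / 4)\<bar>"
      unfolding eq using Kb by simp
  qed
  define v0 where "v0 = (1 - exp (-1)) * exp (-1::real)"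
  have v0: "0 < v0" "v0 < 1"
  proof -
    show "0 < v0" unfolding v0_def by simp
    have "(1 - exp (-1)) * exp (-1::real) \<le> 1 * exp (-1)"
      by (intro mult_right_mono) auto
    moreover have "exp (-1::real) < 1" by simp
    ultimately show "v0 < 1" unfolding v0_def by linarith
  qed
  have P2: "Theta (\<lambda>l. E.variance (exdX \<Omega> l)) (\<lambda>l. exp (- real l / 2))"
    unfolding Theta_def
  proof (rule exI[of _ "v0 / 2"], rule exI[of _ 1], intro conjI allI)
    show "0 < v0 / 2" "v0 / 2 < 1" using v0 by auto
    fix l
    have "v0 / 2 * exp (- real l / 2) < v0 * exp (- real l / 2)" using v0 by simp
    also have "\<dots> \<le> E.variance (exdX \<Omega> l)" unfolding v0_def by (rule E.V_lower)
    finally show "v0 / 2 * \<bar>exp (- real l / 2)\<bar> < \<bar>E.variance (exdX \<Omega> l)\<bar>"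
      using E.V_pos[of l] by simp
    show "\<bar>E.variance (exdX \<Omega> l)\<bar> < 1 * \<bar>exp (- real l / 2)\<bar>"
      using E.V_pos[of l] E.V_upper[of l] by simp
  qed
  have ev_pp: "eventually (\<lambda>l. pp l < d) sequentially" if "0 < d" for d
    by (rule order_tendstoD(2)[OF E.pp_lim that])
  have P3: "\<forall>x>1. (\<lambda>l. E.expectation (\<lambda>\<omega>.
          ((exdX \<Omega> l \<omega> - E.expectation (exdX \<Omega> l))\<^sup>2 / E.variance (exdX \<Omega> l)) *
          indicator {\<omega>\<in>space M. (exdX \<Omega> l \<omega> - E.expectation (exdX \<Omega> l))\<^sup>2
                                   / E.variance (exdX \<Omega> l) > x} \<omega>)) \<longlonglongrightarrow> 1"
  proof (intro allI impI)
    fix x :: real assume x: "1 < x"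
    have lim: "(\<lambda>l. 1 - pp l) \<longlonglongrightarrow> 1 - 0" by (intro tendsto_intros E.pp_lim)
    have xpos: "0 < 1 / (1 + x)" using x by simp
    have "eventually (\<lambda>l. 1 - pp l = E.expectation (\<lambda>\<omega>.
          ((exdX \<Omega> l \<omega> - E.expectation (exdX \<Omega> l))\<^sup>2 / E.variance (exdX \<Omega> l)) *
          indicator {\<omega>\<in>space M. (exdX \<Omega> l \<omega> - E.expectation (exdX \<Omega> l))\<^sup>2
                                   / E.variance (exdX \<Omega> l) > x} \<omega>)) sequentially"
      using ev_pp[OF xpos]
    proof (rule eventually_mono)
      fix l assume h: "pp l < 1 / (1 + x)"
      have p: "0 < pp l" "pp l < 1" using pp_pos pp_lt1 by auto
      have a: "x < (1 - pp l) / pp l" using h p x by (simp add: field_simps)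
      have "1 / (1 + x) < 1 / 2" using x by (simp add: field_simps)
      hence "pp l / (1 - pp l) < 1" using h p by (simp add: field_simps)
      hence b: "\<not> x < pp l / (1 - pp l)" using x by linarith
      show "1 - pp l = E.expectation (\<lambda>\<omega>.
          ((exdX \<Omega> l \<omega> - E.expectation (exdX \<Omega> l))\<^sup>2 / E.variance (exdX \<Omega> l)) *
          indicator {\<omega>\<in>space M. (exdX \<Omega> l \<omega> - E.expectation (exdX \<Omega> l))\<^sup>2
                                   / E.variance (exdX \<Omega> l) > x} \<omega>)"
        unfolding E.tail_E using a b by simp
    qed
    with lim show "(\<lambda>l. E.expectation (\<lambda>\<omega>.
          ((exdX \<Omega> l \<omega> - E.expectation (exdX \<Omega> l))\<^sup>2 / E.variance (exdX \<Omega> l)) *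
          indicator {\<omega>\<in>space M. (exdX \<Omega> l \<omega> - E.expectation (exdX \<Omega> l))\<^sup>2
                                   / E.variance (exdX \<Omega> l) > x} \<omega>)) \<longlonglongrightarrow> 1"
      by (simp add: Lim_transform_eventually)
  qed
  have P4: "\<not> unif_integrable M (\<lambda>l \<omega>. (exdX \<Omega> l \<omega> - E.expectation (exdX \<Omega> l))\<^sup>2
                                   / E.variance (exdX \<Omega> l))"
  proof
    assume "unif_integrable M (\<lambda>l \<omega>. (exdX \<Omega> l \<omega> - E.expectation (exdX \<Omega> l))\<^sup>2
                                   / E.variance (exdX \<Omega> l))"
    hence UI: "\<forall>e>0. \<exists>K. \<forall>l. E.expectation (\<lambda>\<omega>. \<bar>(exdX \<Omega> l \<omega> - E.expectation (exdX \<Omega> l))\<^sup>2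
                                   / E.variance (exdX \<Omega> l)\<bar> * indicator {\<omega>\<in>space M. \<bar>(exdX \<Omega> l \<omega> - E.expectation (exdX \<Omega> l))\<^sup>2
                                   / E.variance (exdX \<Omega> l)\<bar> > K} \<omega>) < e"
      unfolding unif_integrable_def by (elim conjE)
    obtain K where K: "\<And>l. E.expectation (\<lambda>\<omega>. \<bar>(exdX \<Omega> l \<omega> - E.expectation (exdX \<Omega> l))\<^sup>2
                                   / E.variance (exdX \<Omega> l)\<bar> * indicator {\<omega>\<in>space M. \<bar>(exdX \<Omega> l \<omega> - E.expectation (exdX \<Omega> l))\<^sup>2
                                   / E.variance (exdX \<Omega> l)\<bar> > K} \<omega>) < 1/4"
      using UI[THEN spec, of "1/4"] by auto
    obtain l where l: "pp l < 1 / (1 + \<bar>K\<bar>)"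
    proof -
      have "0 < 1 / (1 + \<bar>K\<bar>)" by (simp add: add_pos_nonneg)
      from eventually_happens'[OF _ ev_pp[OF this]] show ?thesis using that by force
    qed
    have p: "0 < pp l" "pp l < 1" using pp_pos pp_lt1 by auto
    have a: "K < (1 - pp l) / pp l"
    proof -
      have "\<bar>K\<bar> < (1 - pp l) / pp l" using l p by (simp add: field_simps)
      thus ?thesis by linarith
    qed
    have abs_eq: "\<bar>(exdX \<Omega> l \<omega> - E.expectation (exdX \<Omega> l))\<^sup>2 / E.variance (exdX \<Omega> l)\<bar>
        = (exdX \<Omega> l \<omega> - E.expectation (exdX \<Omega> l))\<^sup>2 / E.variance (exdX \<Omega> l)" for \<omega>
      using E.Y_nn by simp
    have "1 - pp l \<le> E.expectation (\<lambda>\<omega>. \<bar>(exdX \<Omega> l \<omega> - E.expectation (exdX \<Omega> l))\<^sup>2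
                                   / E.variance (exdX \<Omega> l)\<bar> * indicator {\<omega>\<in>space M. \<bar>(exdX \<Omega> l \<omega> - E.expectation (exdX \<Omega> l))\<^sup>2
                                   / E.variance (exdX \<Omega> l)\<bar> > K} \<omega>)"
      unfolding abs_eq E.tail_E using a p by simp
    moreover have "1/3 \<le> 1 - pp l"
    proof -
      have "exp 1 \<le> (3::real)" by (rule exp_le)
      hence "1/3 \<le> exp (-1::real)" by (simp add: exp_minus field_simps)
      thus ?thesis using pp_le[of l] by linarith
    qed
    ultimately show False using K[of l] by linarith
  qed
  have P5: "\<forall>(\<gamma>::real) (C::nat \<Rightarrow> real) (c\<alpha>::real) (N::'b measure) (D::real \<Rightarrow> nat \<Rightarrow> nat \<Rightarrow> 'b \<Rightarrow> real).
        0 < \<gamma> \<longrightarrow> \<gamma> \<le> 1/2 \<longrightarrow> (\<forall>l. C l > 0) \<longrightarrow> Theta C (\<lambda>l. exp (\<gamma> * real l)) \<longrightarrow>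
        0 < c\<alpha> \<longrightarrow>
        (\<forall>l. \<bar>E.expectation (\<lambda>\<omega>. exX \<Omega> \<omega> - exXl \<Omega> l \<omega>)\<bar> \<le> c\<alpha> * exp (- 3/4 * real l)) \<longrightarrow>
        prob_space N \<longrightarrow>
        (\<forall>\<epsilon>>0. prob_space.indep_vars N (\<lambda>_. borel) (\<lambda>(l, i). D \<epsilon> l i) UNIV
                \<and> (\<forall>l i. distr N borel (D \<epsilon> l i) = distr M borel (exdX \<Omega> l))) \<longrightarrow>
        conv_distr_at_0 N (\<lambda>\<epsilon> \<omega>.
          (mlmc_est (\<lambda>l. E.variance (exdX \<Omega> l)) C c\<alpha> (3/4) \<epsilon> (D \<epsilon>) \<omega>
             - E.expectation (exXl \<Omega> (mlmc_L c\<alpha> (3/4) \<epsilon>)))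
          / sqrt (prob_space.variance N
                   (mlmc_est (\<lambda>l. E.variance (exdX \<Omega> l)) C c\<alpha> (3/4) \<epsilon> (D \<epsilon>))))"
  proof (intro allI impI)
    fix \<gamma> :: real and C :: "nat \<Rightarrow> real" and ca :: real and N :: "'b measure"
      and D :: "real \<Rightarrow> nat \<Rightarrow> nat \<Rightarrow> 'b \<Rightarrow> real"
    assume g0: "0 < \<gamma>" and g1: "\<gamma> \<le> 1/2" and Cp: "\<forall>l. C l > 0" and Th: "Theta C (\<lambda>l. exp (\<gamma> * real l))"
      and ca: "0 < ca" and PN: "prob_space N"
      and DD: "\<forall>\<epsilon>>0. prob_space.indep_vars N (\<lambda>_. borel) (\<lambda>(l, i). D \<epsilon> l i) UNIV
                \<and> (\<forall>l i. distr N borel (D \<epsilon> l i) = distr M borel (exdX \<Omega> l))"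
    interpret Mm: mlmc M \<Omega> N D C ca
    proof (intro mlmc.intro mlmc_axioms.intro exmod.intro exmod_axioms.intro assms PN ca)
      show "0 < C l" for l using Cp by blast
      show "prob_space.indep_vars N (\<lambda>_. borel) (\<lambda>(l, i). D e l i) UNIV" if "0 < e" for e
        using DD that by blast
      show "distr N borel (D e l i) = distr M borel (exdX \<Omega> l)" if "0 < e" for e l i
        using DD that by blast
    qed
    show "conv_distr_at_0 N (\<lambda>\<epsilon> \<omega>.
          (mlmc_est (\<lambda>l. E.variance (exdX \<Omega> l)) C ca (3/4) \<epsilon> (D \<epsilon>) \<omega>
             - E.expectation (exXl \<Omega> (mlmc_L ca (3/4) \<epsilon>)))
          / sqrt (prob_space.variance N
                   (mlmc_est (\<lambda>l. E.variance (exdX \<Omega> l)) C ca (3/4) \<epsilon> (D \<epsilon>))))"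
      by (rule Mm.part5[OF g0 g1 Th])
  qed
  show ?thesis by (intro conjI P1 P2 P3 P4 P5)
qed

end
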